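(* Let $q\in[0,1)$ and $\Omega_n=\{\lambda \text{ partition}:\ell(\lambda)\le n\}$, with $\ell(\lambda)$ the number of nonzero parts. Define $\eta_n(\lambda)=\ell(\lambda)-n$ and $\phi_{n,x}(\lambda)=\prod_{0\le j<-x}q^{\lambda_{n-j}}$ for $x\in\mathbb R$ (empty product $=1$, $q^0=1$, and $q^{\lambda_{-m}}=0$ for $m\ge 0$). Then, for any probability measures on the $\Omega_n$, these satisfy conditions (1)–(4): (1) $0\le\phi_{n,x}\le\phi_{n,y}\le1$ for $x\le y$; (2) for every $\varepsilon>0$ there is $M$ with $\phi_{n,x}<\varepsilon$ whenever $\eta_n-x>M$, uniformly in $n,x$; (3) for every $\varepsilon>0$ there is $M$ with $\phi_{n,x}>1-\varepsilon$ whenever $\eta_n-x<-M$, uniformly in $n,x$; (4) there is $c>0$ independent of $n$ with $\phi_{n,x+1}-\phi_{n,x}\ge c$ whenever $x<\eta_n\le x+1$. Consequently $\{\ell(\lambda)-n\}_{n\ge1}$ and $\{F_n(x)=\mathbb E\prod_{0\le j<-x}q^{\lambda_{n-j}}\}_{n\ge1}$ are asymptotically equivalent as $n\to\infty$.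
   Context: A sequence $\{\eta_n\}_{n\ge1}$ of real random variables spreads if $\lim_{n\to\infty}\sup_{x\in\mathbb R}\mathrm{Prob}\{x<\eta_n\le x+1\}=0$. A sequence $\{F_n\}_{n\ge1}$ of non-decreasing functions $\mathbb R\to\mathbb R$ spreads if $\lim_{n\to\infty}\sup_{x\in\mathbb R}(F_n(x+1)-F_n(x))=0$. A sequence of real random variables $\{\eta_n\}$ and a sequence of non-decreasing functions $\{F_n\}$ are asymptotically equivalent if (i) $\{\eta_n\}$ spreads if and only if $\{F_n\}$ spreads, and (ii) when both spread, $\lim_{n\to\infty}\sup_{x\in\mathbb R}(\mathrm{Prob}\{\eta_n\le x\}-F_n(x))=0$. *)

theory Defs
  imports "HOL-Probability.Probability"
begin

text \<open>Partitions are represented as weakly decreasing lists of positive parts;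
  the length of the list is the number of nonzero parts.\<close>
definition is_partition :: "nat list \<Rightarrow> bool" where
  "is_partition lam \<longleftrightarrow> sorted_wrt (\<ge>) lam \<and> (\<forall>a\<in>set lam. 0 < a)"

definition Omega :: "nat \<Rightarrow> nat list set" where
  "Omega n = {lam. is_partition lam \<and> length lam \<le> n}"

text \<open>The i-th part (1-based); parts beyond the length are 0.\<close>
definition part :: "nat list \<Rightarrow> int \<Rightarrow> nat" where
  "part lam i = (if 1 \<le> i \<and> i \<le> int (length lam) then lam ! nat (i - 1) else 0)"

definition qfac :: "real \<Rightarrow> nat list \<Rightarrow> int \<Rightarrow> real" where
  "qfac q lam i = (if i \<le> 0 then 0 else q ^ part lam i)"

definition eta :: "nat \<Rightarrow> nat list \<Rightarrow> real" where
  "eta n lam = real (length lam) - real n"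

definition phi :: "real \<Rightarrow> nat \<Rightarrow> real \<Rightarrow> nat list \<Rightarrow> real" where
  "phi q n x lam = (\<Prod>j\<in>{j::nat. real j < - x}. qfac q lam (int n - int j))"

definition spreads_rv :: "(nat \<Rightarrow> 'a measure) \<Rightarrow> (nat \<Rightarrow> 'a \<Rightarrow> real) \<Rightarrow> bool" where
  "spreads_rv M eta' \<longleftrightarrow>
     (\<lambda>n. SUP x::real. measure (M n) {w \<in> space (M n). x < eta' n w \<and> eta' n w \<le> x + 1})
       \<longlonglongrightarrow> 0"

definition spreads_fun :: "(nat \<Rightarrow> real \<Rightarrow> real) \<Rightarrow> bool" where
  "spreads_fun F \<longleftrightarrow> (\<lambda>n. SUP x::real. F n (x + 1) - F n x) \<longlonglongrightarrow> 0"

definition asympt_equivalent ::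
  "(nat \<Rightarrow> 'a measure) \<Rightarrow> (nat \<Rightarrow> 'a \<Rightarrow> real) \<Rightarrow> (nat \<Rightarrow> real \<Rightarrow> real) \<Rightarrow> bool" where
  "asympt_equivalent M eta' F \<longleftrightarrow>
     (spreads_rv M eta' \<longleftrightarrow> spreads_fun F) \<and>
     (spreads_rv M eta' \<and> spreads_fun F \<longrightarrow>
        (\<lambda>n. SUP x::real. measure (M n) {w \<in> space (M n). eta' n w \<le> x} - F n x) \<longlonglongrightarrow> 0)"

end

theory Submission
  imports Defs
begin

lemma qfac_bounds:
  assumes "0 \<le> q" "q \<le> 1"
  shows "0 \<le> qfac q lam i \<and> qfac q lam i \<le> 1"
  using assms by (auto simp: qfac_def power_le_one)

lemma phi_alt: "phi q n x lam = (\<Prod>j<nat \<lceil>-x\<rceil>. qfac q lam (int n - int j))"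
proof -
  have "{j::nat. real j < - x} = {..<nat \<lceil>-x\<rceil>}"
  proof (intro set_eqI iffI)
    fix j assume "j \<in> {j::nat. real j < - x}"
    then have "int j < \<lceil>-x\<rceil>" by (simp add: less_ceiling_iff)
    then show "j \<in> {..<nat \<lceil>-x\<rceil>}" by simp
  next
    fix j assume "j \<in> {..<nat \<lceil>-x\<rceil>}"
    then have "int j < \<lceil>-x\<rceil>" by simp
    then show "j \<in> {j::nat. real j < - x}" by (simp add: less_ceiling_iff)
  qed
  then show ?thesis unfolding phi_def by simp
qed

lemma phi_bounds:
  assumes "0 \<le> q" "q \<le> 1"
  shows "0 \<le> phi q n x lam \<and> phi q n x lam \<le> 1"
  unfolding phi_alt using qfac_bounds[OF assms]
  by (auto intro: prod_nonneg prod_le_1)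

lemma phi_mono:
  assumes "0 \<le> q" "q \<le> 1" "x \<le> y"
  shows "phi q n x lam \<le> phi q n y lam"
proof -
  let ?f = "\<lambda>j. qfac q lam (int n - int j)"
  have sub: "{..<nat \<lceil>-y\<rceil>} \<subseteq> {..<nat \<lceil>-x\<rceil>}"
  proof -
    have "nat \<lceil>-y\<rceil> \<le> nat \<lceil>-x\<rceil>" using assms(3) by (intro nat_mono ceiling_mono) simp
    then show ?thesis by auto
  qed
  have "prod ?f {..<nat \<lceil>-x\<rceil>} = prod ?f ({..<nat \<lceil>-x\<rceil>} - {..<nat \<lceil>-y\<rceil>}) * prod ?f {..<nat \<lceil>-y\<rceil>}"
    by (rule prod.subset_diff[OF sub]) simp
  also have "\<dots> \<le> prod ?f {..<nat \<lceil>-y\<rceil>}"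
    using qfac_bounds[OF assms(1,2)]
    by (intro mult_left_le_one_le prod_nonneg prod_le_1) auto
  finally show ?thesis unfolding phi_alt .
qed

lemma phi_one:
  assumes "length lam \<le> n" "eta n lam \<le> x"
  shows "phi q n x lam = 1"
  unfolding phi_alt
proof (rule prod.neutral, intro ballI)
  fix j assume "j \<in> {..<nat \<lceil>-x\<rceil>}"
  then have "int j < \<lceil>-x\<rceil>" by simp
  then have "real j < -x" by (simp add: less_ceiling_iff)
  with assms have "real j < real n - real (length lam)" by (simp add: eta_def)
  then have "int n - int j > int (length lam)" by linarith
  then show "qfac q lam (int n - int j) = 1" by (simp add: qfac_def part_def)
qed

lemma phi_zero:
  assumes "x < - real n"
  shows "phi q n x lam = 0"
  unfolding phi_alt
proof (rule prod_zero)
  have "int n < \<lceil>-x\<rceil>" using assms by (simp add: less_ceiling_iff)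
  then show "\<exists>a\<in>{..<nat \<lceil>-x\<rceil>}. qfac q lam (int n - int a) = 0"
    by (intro bexI[of _ n]) (auto simp: qfac_def)
qed simp

lemma phi_le:
  assumes "0 \<le> q" "q \<le> 1" "is_partition lam" "length lam \<le> n"
  shows "phi q n x lam \<le> q ^ nat \<lceil>eta n lam - x\<rceil>"
proof -
  let ?f = "\<lambda>j. qfac q lam (int n - int j)"
  define l where "l = length lam"
  define N where "N = nat \<lceil>-x\<rceil>"
  define B where "B = {n - l..<N}"
  have sub: "B \<subseteq> {..<N}" by (auto simp: B_def)
  have fB: "?f j \<le> q" if "j \<in> B" for j
  proof (cases "int n - int j \<le> 0")
    case True then show ?thesis using assms by (simp add: qfac_def)
  next
    case False
    have "int n - int j \<le> int l" using that assms(4) by (auto simp: B_def l_def)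
    then have pos: "0 < part lam (int n - int j)"
      using False assms(3) unfolding part_def is_partition_def l_def
      by (auto intro!: bspec[of _ _ "lam ! nat (int n - int j - 1)"])
    have "q ^ part lam (int n - int j) \<le> q ^ 1"
      by (rule power_decreasing) (use pos assms in auto)
    then show ?thesis using False by (simp add: qfac_def)
  qed
  have "prod ?f {..<N} = prod ?f ({..<N} - B) * prod ?f B"
    by (rule prod.subset_diff[OF sub]) simp
  also have "\<dots> \<le> prod ?f B"
    using qfac_bounds[OF assms(1,2)]
    by (intro mult_left_le_one_le prod_nonneg prod_le_1) auto
  also have "\<dots> \<le> prod (\<lambda>_. q) B"
    using qfac_bounds[OF assms(1,2)] fB by (intro prod_mono) auto
  also have "\<dots> = q ^ card B" by simp
  also have "card B = nat \<lceil>eta n lam - x\<rceil>"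
  proof -
    have "\<lceil>eta n lam - x\<rceil> = \<lceil>-x + of_int (int l - int n)\<rceil>"
      by (simp add: eta_def l_def algebra_simps)
    also have "\<dots> = \<lceil>-x\<rceil> + (int l - int n)" by (rule ceiling_add_of_int)
    finally show ?thesis using assms(4) by (simp add: B_def N_def l_def)
  qed
  finally show ?thesis unfolding phi_alt N_def .
qed


lemma eta_int: "eta n lam = of_int (int (length lam) - int n)"
  by (simp add: eta_def)

lemma diff_lower:
  assumes "0 \<le> q" "q < 1" "lam \<in> Omega n"
  shows "(1 - q) * indicator {w. x < eta n w \<and> eta n w \<le> x + 1} lam
         \<le> phi q n (x + 1) lam - phi q n x lam"
proof (cases "x < eta n lam \<and> eta n lam \<le> x + 1")
  case True
  have l: "length lam \<le> n" "is_partition lam" using assms(3) by (auto simp: Omega_def)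
  have one: "phi q n (x + 1) lam = 1" using phi_one[OF l(1)] True by simp
  have "\<lceil>eta n lam - x\<rceil> = 1" using True by (simp add: ceiling_eq_iff)
  then have "phi q n x lam \<le> q" using phi_le[OF assms(1) _ l(2) l(1), of x] assms(2) by simp
  then show ?thesis using True one by simp
next
  case False
  then show ?thesis using phi_mono[of q "x" "x+1" n lam] assms by simp
qed

lemma diff_upper:
  assumes "0 \<le> q" "q < 1" "lam \<in> Omega n" "K \<ge> 1"
  shows "phi q n (x + 1) lam - phi q n x lam
         \<le> q ^ K + indicator {w. x < eta n w \<and> eta n w \<le> x + real K} lam"
proof -
  have l: "length lam \<le> n" "is_partition lam" using assms(3) by (auto simp: Omega_def)
  have b1: "0 \<le> phi q n x lam" "phi q n (x+1) lam \<le> 1" using phi_bounds[of q] assms by auto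
  have qK: "0 \<le> q ^ K" using assms by simp
  consider "eta n lam \<le> x" | "x < eta n lam \<and> eta n lam \<le> x + real K" | "eta n lam > x + real K"
    by linarith
  then show ?thesis
  proof cases
    case 1
    then have "phi q n (x + 1) lam = 1" "phi q n x lam = 1" using phi_one[OF l(1)] by auto
    then show ?thesis using qK by simp
  next
    case 2
    then show ?thesis using b1 qK by simp
  next
    case 3
    have "int K \<le> \<lceil>eta n lam - (x + 1)\<rceil>" using 3 by (simp add: le_ceiling_iff)
    then have "K \<le> nat \<lceil>eta n lam - (x + 1)\<rceil>" by linarith
    then have "q ^ nat \<lceil>eta n lam - (x + 1)\<rceil> \<le> q ^ K"
      using assms by (intro power_decreasing) auto
    then have "phi q n (x+1) lam \<le> q ^ K"
      using phi_le[OF assms(1) _ l(2) l(1), of "x+1"] assms(2) by simp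
    then show ?thesis using b1 3 by simp
  qed
qed

lemma pmf_integrable_bdd:
  assumes "\<And>x. \<bar>f x\<bar> \<le> B"
  shows "integrable (measure_pmf P) (f :: 'a \<Rightarrow> real)"
  by (rule measure_pmf.integrable_const_bound[where B=B]) (use assms in auto)

lemma union_bound:
  fixes e :: "'a \<Rightarrow> real"
  assumes "\<And>y. measure_pmf.prob P {w. y < e w \<and> e w \<le> y + 1} \<le> s"
  shows "measure_pmf.prob P {w. x < e w \<and> e w \<le> x + real K} \<le> real K * s"
proof (induction K)
  case 0
  have e: "{w. x < e w \<and> e w \<le> x} = {}" by auto
  show ?case unfolding of_nat_0 add_0_right e by simp
next
  case (Suc K)
  have "{w. x < e w \<and> e w \<le> x + real (Suc K)} \<subseteq>
        {w. x < e w \<and> e w \<le> x + real K} \<union> {w. x + real K < e w \<and> e w \<le> x + real K + 1}"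
    by auto
  then have "measure_pmf.prob P {w. x < e w \<and> e w \<le> x + real (Suc K)} \<le>
        measure_pmf.prob P ({w. x < e w \<and> e w \<le> x + real K} \<union> {w. x + real K < e w \<and> e w \<le> x + real K + 1})"
    by (intro measure_pmf.finite_measure_mono) auto
  also have "\<dots> \<le> measure_pmf.prob P {w. x < e w \<and> e w \<le> x + real K} +
                  measure_pmf.prob P {w. x + real K < e w \<and> e w \<le> x + real K + 1}"
    by (rule measure_Un_le) auto
  also have "\<dots> \<le> real K * s + s" using Suc assms[of "x + real K"] by simp
  finally show ?case by (simp add: algebra_simps)
qed

lemma to0:
  fixes g :: "nat \<Rightarrow> real"
  assumes "eventually (\<lambda>n. 0 \<le> g n) sequentially"
    and "\<And>\<epsilon>. \<epsilon> > 0 \<Longrightarrow> eventually (\<lambda>n. g n < \<epsilon>) sequentially"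
  shows "g \<longlonglongrightarrow> 0"
  unfolding tendsto_iff dist_real_def
proof (intro allI impI)
  fix \<epsilon> :: real assume "\<epsilon> > 0"
  show "eventually (\<lambda>n. \<bar>g n - 0\<bar> < \<epsilon>) sequentially"
    using eventually_conj[OF assms(1) assms(2)[OF \<open>\<epsilon> > 0\<close>]]
    by (rule eventually_mono) auto
qed

theorem proposition5p8:
  fixes q :: real and P :: "nat \<Rightarrow> nat list pmf"
  assumes "0 \<le> q" and "q < 1"
    and "\<forall>n\<ge>1. set_pmf (P n) \<subseteq> Omega n"
  shows "(\<forall>n\<ge>1. \<forall>lam\<in>Omega n. \<forall>x y. x \<le> y \<longrightarrow>
            0 \<le> phi q n x lam \<and> phi q n x lam \<le> phi q n y lam \<and> phi q n y lam \<le> 1)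
    \<and> (\<forall>\<epsilon>>0. \<exists>M. \<forall>n\<ge>1. \<forall>lam\<in>Omega n. \<forall>x.
            eta n lam - x > M \<longrightarrow> phi q n x lam < \<epsilon>)
    \<and> (\<forall>\<epsilon>>0. \<exists>M. \<forall>n\<ge>1. \<forall>lam\<in>Omega n. \<forall>x.
            eta n lam - x < - M \<longrightarrow> phi q n x lam > 1 - \<epsilon>)
    \<and> (\<exists>c>0. \<forall>n\<ge>1. \<forall>lam\<in>Omega n. \<forall>x.
            x < eta n lam \<and> eta n lam \<le> x + 1 \<longrightarrow> phi q n (x + 1) lam - phi q n x lam \<ge> c)
    \<and> (\<forall>n\<ge>1. mono (\<lambda>x. measure_pmf.expectation (P n) (phi q n x)))
    \<and> asympt_equivalent (\<lambda>n. measure_pmf (P n)) eta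
        (\<lambda>n x. measure_pmf.expectation (P n) (phi q n x))"
proof -
  have q1: "q \<le> 1" using assms(2) by simp
  have Om: "\<And>n lam. lam \<in> Omega n \<Longrightarrow> length lam \<le> n \<and> is_partition lam"
    by (auto simp: Omega_def)
  have c1: "\<forall>n\<ge>1. \<forall>lam\<in>Omega n. \<forall>x y. x \<le> y \<longrightarrow>
            0 \<le> phi q n x lam \<and> phi q n x lam \<le> phi q n y lam \<and> phi q n y lam \<le> 1"
    using phi_bounds[OF assms(1) q1] phi_mono[OF assms(1) q1] by blast
  have c2: "\<forall>\<epsilon>>0. \<exists>M. \<forall>n\<ge>1. \<forall>lam\<in>Omega n. \<forall>x.
            eta n lam - x > M \<longrightarrow> phi q n x lam < \<epsilon>"
  proof (intro allI impI)
    fix \<epsilon> :: real assume "\<epsilon> > 0"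
    then obtain K where K: "q ^ K < \<epsilon>" using real_arch_pow_inv assms(2) by blast
    show "\<exists>M. \<forall>n\<ge>1. \<forall>lam\<in>Omega n. \<forall>x. eta n lam - x > M \<longrightarrow> phi q n x lam < \<epsilon>"
    proof (intro exI[of _ "real K"] allI impI ballI)
      fix n lam x assume "lam \<in> Omega n" "real K < eta n lam - x"
      then have "int K \<le> \<lceil>eta n lam - x\<rceil>" by (simp add: le_ceiling_iff)
      then have "K \<le> nat \<lceil>eta n lam - x\<rceil>" by linarith
      then have "q ^ nat \<lceil>eta n lam - x\<rceil> \<le> q ^ K"
        using assms q1 by (intro power_decreasing) auto
      then show "phi q n x lam < \<epsilon>"
        using phi_le[OF assms(1) q1, of lam n x] Om[OF \<open>lam \<in> Omega n\<close>] K by linarith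
    qed
  qed
  have c3: "\<forall>\<epsilon>>0. \<exists>M. \<forall>n\<ge>1. \<forall>lam\<in>Omega n. \<forall>x.
            eta n lam - x < - M \<longrightarrow> phi q n x lam > 1 - \<epsilon>"
  proof (intro allI impI exI[of _ 0] ballI)
    fix \<epsilon> :: real and n lam x assume "\<epsilon> > 0" "lam \<in> Omega n" "eta n lam - x < - 0"
    then show "phi q n x lam > 1 - \<epsilon>" using phi_one[of lam n x q] Om by auto
  qed
  have c4: "\<exists>c>0. \<forall>n\<ge>1. \<forall>lam\<in>Omega n. \<forall>x.
            x < eta n lam \<and> eta n lam \<le> x + 1 \<longrightarrow> phi q n (x + 1) lam - phi q n x lam \<ge> c"
  proof (intro exI[of _ "1 - q"] conjI allI impI ballI)
    fix n :: nat and lam x assume "lam \<in> Omega n" "x < eta n lam \<and> eta n lam \<le> x + 1"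
    then show "phi q n (x + 1) lam - phi q n x lam \<ge> 1 - q"
      using diff_lower[OF assms(1,2), of lam n x] by simp
  qed (use assms in simp)
  have inO: "\<And>n w. n \<ge> 1 \<Longrightarrow> w \<in> set_pmf (P n) \<Longrightarrow> w \<in> Omega n"
    using assms(3) by blast
  define F where "F n x = measure_pmf.expectation (P n) (phi q n x)" for n x
  have integ: "\<And>n x. integrable (measure_pmf (P n)) (phi q n x)"
    using phi_bounds[OF assms(1) q1] by (intro pmf_integrable_bdd[where B=1]) auto
  have integI: "\<And>n A. integrable (measure_pmf (P n)) (indicator A :: _ \<Rightarrow> real)"
    by (intro pmf_integrable_bdd[where B=1]) (auto simp: indicator_def)
  have Fb: "0 \<le> F n x \<and> F n x \<le> 1" for n x
  proof
    show "0 \<le> F n x" unfolding F_def using phi_bounds[OF assms(1) q1] by (intro integral_nonneg_AE) auto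
    have "F n x \<le> measure_pmf.expectation (P n) (\<lambda>_. 1)" unfolding F_def
      using phi_bounds[OF assms(1) q1] integ by (intro integral_mono) auto
    then show "F n x \<le> 1" by simp
  qed
  have Fdiff: "F n (x+1) - F n x = measure_pmf.expectation (P n) (\<lambda>w. phi q n (x+1) w - phi q n x w)" for n x
    unfolding F_def using Bochner_Integration.integral_diff[OF integ[of n "x+1"] integ[of n x]] by simp
  have c5: "\<forall>n\<ge>1. mono (\<lambda>x. measure_pmf.expectation (P n) (phi q n x))"
    using phi_mono[OF assms(1) q1] integ by (auto intro!: monoI integral_mono)
  define p where "p n x = measure (measure_pmf (P n)) {w \<in> space (measure_pmf (P n)). x < eta n w \<and> eta n w \<le> x + 1}" for n x
  define S where "S n = (SUP x. p n x)" for n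
  define G where "G n = (SUP x. F n (x + 1) - F n x)" for n
  have pb: "0 \<le> p n x \<and> p n x \<le> 1" for n x unfolding p_def by simp
  have bddp: "bdd_above (range (p n))" for n using pb by (intro bdd_aboveI2[where M=1]) auto
  have bddG: "bdd_above (range (\<lambda>x. F n (x + 1) - F n x))" for n
  proof (rule bdd_aboveI[where M=1])
    fix y assume "y \<in> range (\<lambda>x. F n (x + 1) - F n x)"
    then obtain x where "y = F n (x + 1) - F n x" by auto
    then show "y \<le> 1" using Fb[of n "x+1"] Fb[of n x] by linarith
  qed
  have S0: "0 \<le> S n" for n
    unfolding S_def using pb cSUP_upper[OF UNIV_I bddp, of n 0] by smt
  have G0: "0 \<le> G n" if "n \<ge> 1" for n
  proof -
    have "F n (0+1) - F n 0 \<ge> 0" using c5 that by (auto simp: mono_def F_def)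
    then show ?thesis unfolding G_def using cSUP_upper[OF UNIV_I bddG[of n], of 0] by linarith
  qed
  have pS: "p n x \<le> S n" for n x unfolding S_def by (rule cSUP_upper[OF UNIV_I bddp])
  have key1: "S n \<le> G n / (1 - q)" if "n \<ge> 1" for n
    unfolding S_def
  proof (rule cSUP_least)
    fix x
    have "(1 - q) * p n x = measure_pmf.expectation (P n)
            (\<lambda>w. (1 - q) * indicator {w. x < eta n w \<and> eta n w \<le> x + 1} w)"
      unfolding p_def by simp
    also have "\<dots> \<le> measure_pmf.expectation (P n) (\<lambda>w. phi q n (x+1) w - phi q n x w)"
      using integ integI that
      by (intro integral_mono_AE) (auto simp: AE_measure_pmf_iff intro!: diff_lower[OF assms(1,2)] inO)
    also have "\<dots> = F n (x+1) - F n x" by (rule Fdiff[symmetric])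
    also have "\<dots> \<le> G n" unfolding G_def by (rule cSUP_upper[OF UNIV_I bddG])
    finally show "p n x \<le> G n / (1 - q)" using assms(2) by (simp add: field_simps mult.commute)
  qed simp
  have key2: "G n \<le> q ^ K + real K * S n" if "n \<ge> 1" "K \<ge> 1" for n K
    unfolding G_def
  proof (rule cSUP_least)
    fix x
    have "F n (x+1) - F n x = measure_pmf.expectation (P n) (\<lambda>w. phi q n (x+1) w - phi q n x w)"
      by (rule Fdiff)
    also have "\<dots> \<le> measure_pmf.expectation (P n)
             (\<lambda>w. q ^ K + indicator {w. x < eta n w \<and> eta n w \<le> x + real K} w)"
      using integ integI that
      by (intro integral_mono_AE) (auto simp: AE_measure_pmf_iff intro!: diff_upper[OF assms(1,2)] inO)
    also have "\<dots> = q ^ K + measure_pmf.prob (P n) {w. x < eta n w \<and> eta n w \<le> x + real K}"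
      using Bochner_Integration.integral_add[OF measure_pmf.integrable_const[of "P n" "q ^ K"] integI[of n "{w. x < eta n w \<and> eta n w \<le> x + real K}"]]
      by simp
    also have "measure_pmf.prob (P n) {w. x < eta n w \<and> eta n w \<le> x + real K} \<le> real K * S n"
      by (rule union_bound) (use pS in \<open>simp add: p_def\<close>)
    finally show "F n (x+1) - F n x \<le> q ^ K + real K * S n" by simp
  qed simp
  have ev1: "eventually (\<lambda>n. n \<ge> (1::nat)) sequentially" by (rule eventually_ge_at_top)
  have e1: "S \<longlonglongrightarrow> 0" if "G \<longlonglongrightarrow> 0"
  proof (rule to0)
    show "eventually (\<lambda>n. 0 \<le> S n) sequentially" using S0 by simp
    fix \<epsilon> :: real assume "\<epsilon> > 0"
    then have "0 < \<epsilon> * (1 - q)" using assms by simp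
    from order_tendstoD(2)[OF that this] ev1
    show "eventually (\<lambda>n. S n < \<epsilon>) sequentially"
    proof (rule eventually_elim2)
      fix n :: nat assume "G n < \<epsilon> * (1 - q)" "n \<ge> 1"
      then have "G n / (1 - q) < \<epsilon>" using assms(2) by (simp add: divide_less_eq)
      then show "S n < \<epsilon>" using key1[of n] \<open>n \<ge> 1\<close> by linarith
    qed
  qed
  have e2: "G \<longlonglongrightarrow> 0" if "S \<longlonglongrightarrow> 0"
  proof (rule to0)
    show "eventually (\<lambda>n. 0 \<le> G n) sequentially" using ev1 by (rule eventually_mono) (rule G0)
    fix \<epsilon> :: real assume "\<epsilon> > 0"
    then obtain K0 where K0: "q ^ K0 < \<epsilon> / 2" using real_arch_pow_inv assms(2) by (metis half_gt_zero)
    define K where "K = Suc K0"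
    have "q ^ K \<le> q ^ K0" unfolding K_def using assms q1 by (intro power_decreasing) auto
    with K0 have K: "q ^ K < \<epsilon> / 2" "K \<ge> 1" unfolding K_def by auto
    have "0 < \<epsilon> / (2 * real K)" using \<open>\<epsilon> > 0\<close> K by simp
    from order_tendstoD(2)[OF that this] ev1
    show "eventually (\<lambda>n. G n < \<epsilon>) sequentially"
    proof (rule eventually_elim2)
      fix n :: nat assume a: "S n < \<epsilon> / (2 * real K)" "n \<ge> 1"
      have "real K * S n < real K * (\<epsilon> / (2 * real K))"
        using a K by (intro mult_strict_left_mono) auto
      also have "\<dots> = \<epsilon> / 2" using K by simp
      finally show "G n < \<epsilon>" using key2[OF a(2) K(2)] K by linarith
    qed
  qed
  have e3: "(\<lambda>n. SUP x::real. measure (measure_pmf (P n)) {w \<in> space (measure_pmf (P n)). eta n w \<le> x} - F n x)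
            \<longlonglongrightarrow> 0"
  proof (rule tendsto_eventually)
    show "\<forall>\<^sub>F n in sequentially. (SUP x::real. measure (measure_pmf (P n)) {w \<in> space (measure_pmf (P n)). eta n w \<le> x} - F n x) = 0"
      using ev1
    proof (rule eventually_mono)
      fix n :: nat assume "n \<ge> 1"
      let ?h = "\<lambda>x. measure (measure_pmf (P n)) {w \<in> space (measure_pmf (P n)). eta n w \<le> x} - F n x"
      have le: "?h x \<le> 0" for x
      proof -
        have "measure (measure_pmf (P n)) {w \<in> space (measure_pmf (P n)). eta n w \<le> x}
              = measure_pmf.expectation (P n) (indicator {w. eta n w \<le> x})" by simp
        also have "\<dots> \<le> F n x" unfolding F_def
        proof (intro integral_mono_AE integ integI)
          show "AE w in measure_pmf (P n). indicator {w. eta n w \<le> x} w \<le> phi q n x w"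
            unfolding AE_measure_pmf_iff
          proof
            fix w assume "w \<in> set_pmf (P n)"
            then have "length w \<le> n" using inO[OF \<open>n \<ge> 1\<close>] Om by blast
            then show "indicator {w. eta n w \<le> x} w \<le> phi q n x w"
              using phi_one[of w n x q] phi_bounds[OF assms(1) q1, of n x w]
              by (auto simp: indicator_def)
          qed
        qed
        finally show ?thesis by simp
      qed
      have bdd: "bdd_above (range ?h)" using le by (intro bdd_aboveI2[where M=0]) auto
      have x0: "?h (- real n - 1) = 0"
      proof -
        have "{w \<in> space (measure_pmf (P n)). eta n w \<le> - real n - 1} = {}"
          by (auto simp: eta_def)
        moreover have "phi q n (- real n - 1) = (\<lambda>_. 0)" by (rule ext, rule phi_zero) simp
        ultimately show ?thesis by (simp add: F_def)
      qed
      show "(SUP x. ?h x) = 0"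
      proof (rule antisym)
        show "(SUP x. ?h x) \<le> 0" by (rule cSUP_least) (use le in auto)
        show "0 \<le> (SUP x. ?h x)" using cSUP_upper[OF UNIV_I bdd, of "- real n - 1"] x0 by simp
      qed
    qed
  qed
  have c6: "asympt_equivalent (\<lambda>n. measure_pmf (P n)) eta (\<lambda>n x. F n x)"
    unfolding asympt_equivalent_def spreads_rv_def spreads_fun_def
    using e1 e2 e3 unfolding S_def G_def p_def by blast
  show ?thesis using c1 c2 c3 c4 c5 c6 unfolding F_def by blast
qed

end
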